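(* Let $N$ be a bidirected Manhattan network on $T$ such that the boundary of every strip is contained in $N$ and is directed in $N$ as a directed cycle (clockwise or counterclockwise). Then any two strips belonging to the same block are compatible.
   Context: $T$ is a finite set of points (terminals) in the plane, no two on a common horizontal or vertical line. For points $p,q$, $R(p,q)$ is the smallest closed axis-parallel rectangle containing $p$ and $q$; for ${\bf t}_i,{\bf t}_j\in T$, $R_{i,j}=R({\bf t}_i,{\bf t}_j)$, and $R_{i,j}$ is empty if $R_{i,j}\cap T=\{{\bf t}_i,{\bf t}_j\}$. $\Gamma(T)$ is the grid formed by the horizontal and vertical lines through the terminals, restricted to the bounding box of $T$ (vertices: intersection points of these lines; edges: segments between consecutive vertices on a line). An oriented subnetwork of $\Gamma(T)$ is a set of edges of $\Gamma(T)$ each directed in exactly one sense; a directed Manhattan path from $p$ to $q$ is a directed path in it of length $|p^x-q^x|+|p^y-q^y|$. A bidirected Manhattan network on $T$ is an oriented subnetwork of $\Gamma(T)$ containing a directed Manhattan path from $t$ to $t'$ for every ordered pair of distinct terminals $t,t'\in T$. An empty rectangle $R_{i,j}$ is a vertical strip if ${\bf t}_i^x,{\bf t}_j^x$ are consecutive in the sorted list of $x$-coordinates of $T$, and a horizontal strip if ${\bf t}_i^y,{\bf t}_j^y$ are consecutive in the sorted list of $y$-coordinates of $T$; a strip is a vertical or horizontal strip. $R_{i,j}$ has positive slope if $({\bf t}_i^x-{\bf t}_j^x)({\bf t}_i^y-{\bf t}_j^y)>0$, negative slope otherwise. Two strips (whose boundaries are directed cycles) are compatible if they have the same slope and the same orientation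 (both clockwise or both counterclockwise), or different slopes and opposite orientations. Quadrants: $Q_1(p)=\{q:q^x\ge p^x,q^y\ge p^y\}$, $Q_2(p)=\{q:q^x\le p^x,q^y\ge p^y\}$, $Q_3(p)=\{q:q^x\le p^x,q^y\le p^y\}$, $Q_4(p)=\{q:q^x\ge p^x,q^y\le p^y\}$. Blocks: let $P_{24}=\{t\in T: Q_2(t)\cap T=Q_4(t)\cap T=\{t\}\}$ and $P_{13}=\{t\in T:Q_1(t)\cap T=Q_3(t)\cap T=\{t\}\}$. If $P_{24}\ne\emptyset$, sort it by $x$-coordinate as $p_1,\dots,p_m$; the blocks are $T\cap Q_3(p_1)$, $T\cap R(p_a,p_{a+1})$ for $1\le a<m$, and $T\cap Q_1(p_m)$. If $P_{24}=\emptyset\ne P_{13}$, sort $P_{13}$ by $x$-coordinate as $p_1,\dots,p_m$; the blocks are $T\cap Q_2(p_1)$, $T\cap R(p_a,p_{a+1})$ for $1\le a<m$, and $T\cap Q_4(p_m)$. If both are empty, $T$ itself is the only block. A strip $R_{i,j}$ belongs to a block $B$ if ${\bf t}_i,{\bf t}_j\in B$. *)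

theory Defs
  imports Complex_Main
begin

type_synonym pt = "real \<times> real"

definition general_position :: "pt set \<Rightarrow> bool" where
  "general_position T \<longleftrightarrow> finite T \<and>
     (\<forall>p\<in>T. \<forall>q\<in>T. p \<noteq> q \<longrightarrow> fst p \<noteq> fst q \<and> snd p \<noteq> snd q)"

definition rect :: "pt \<Rightarrow> pt \<Rightarrow> pt set" where
  "rect p q = {r. min (fst p) (fst q) \<le> fst r \<and> fst r \<le> max (fst p) (fst q) \<and>
                  min (snd p) (snd q) \<le> snd r \<and> snd r \<le> max (snd p) (snd q)}"

definition Q1 :: "pt \<Rightarrow> pt set" where "Q1 p = {q. fst q \<ge> fst p \<and> snd q \<ge> snd p}"
definition Q2 :: "pt \<Rightarrow> pt set" where "Q2 p = {q. fst q \<le> fst p \<and> snd q \<ge> snd p}"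
definition Q3 :: "pt \<Rightarrow> pt set" where "Q3 p = {q. fst q \<le> fst p \<and> snd q \<le> snd p}"
definition Q4 :: "pt \<Rightarrow> pt set" where "Q4 p = {q. fst q \<ge> fst p \<and> snd q \<le> snd p}"

text \<open>Edges of the grid Gamma(T): segments between consecutive grid vertices on a
  horizontal or vertical line through a terminal (as unordered pairs, given in both orders).\<close>
definition grid_edge :: "pt set \<Rightarrow> pt \<Rightarrow> pt \<Rightarrow> bool" where
  "grid_edge T u v \<longleftrightarrow>
     (snd u = snd v \<and> snd u \<in> snd ` T \<and> fst u \<in> fst ` T \<and> fst v \<in> fst ` T \<and> fst u \<noteq> fst v \<and>
        \<not> (\<exists>x\<in>fst ` T. min (fst u) (fst v) < x \<and> x < max (fst u) (fst v))) \<or>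
     (fst u = fst v \<and> fst u \<in> fst ` T \<and> snd u \<in> snd ` T \<and> snd v \<in> snd ` T \<and> snd u \<noteq> snd v \<and>
        \<not> (\<exists>y\<in>snd ` T. min (snd u) (snd v) < y \<and> y < max (snd u) (snd v)))"

definition oriented_subnetwork :: "pt set \<Rightarrow> (pt \<times> pt) set \<Rightarrow> bool" where
  "oriented_subnetwork T N \<longleftrightarrow>
     (\<forall>(u,v)\<in>N. grid_edge T u v) \<and> (\<forall>(u,v)\<in>N. (v,u) \<notin> N)"

definition l1 :: "pt \<Rightarrow> pt \<Rightarrow> real" where
  "l1 p q = \<bar>fst p - fst q\<bar> + \<bar>snd p - snd q\<bar>"

definition manhattan_path :: "(pt \<times> pt) set \<Rightarrow> pt \<Rightarrow> pt \<Rightarrow> bool" where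
  "manhattan_path N p q \<longleftrightarrow>
     (\<exists>vs. vs \<noteq> [] \<and> hd vs = p \<and> last vs = q \<and>
        (\<forall>e\<in>set (zip vs (tl vs)). e \<in> N) \<and>
        sum_list (map (\<lambda>(u,v). l1 u v) (zip vs (tl vs))) = l1 p q)"

definition bidirected_manhattan :: "pt set \<Rightarrow> (pt \<times> pt) set \<Rightarrow> bool" where
  "bidirected_manhattan T N \<longleftrightarrow> oriented_subnetwork T N \<and>
     (\<forall>t\<in>T. \<forall>t'\<in>T. t \<noteq> t' \<longrightarrow> manhattan_path N t t')"

definition empty_rect :: "pt set \<Rightarrow> pt \<Rightarrow> pt \<Rightarrow> bool" where
  "empty_rect T p q \<longleftrightarrow> rect p q \<inter> T = {p, q}"

definition vstrip :: "pt set \<Rightarrow> pt \<Rightarrow> pt \<Rightarrow> bool" where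
  "vstrip T p q \<longleftrightarrow> p \<in> T \<and> q \<in> T \<and> p \<noteq> q \<and> empty_rect T p q \<and>
     \<not> (\<exists>t\<in>T. min (fst p) (fst q) < fst t \<and> fst t < max (fst p) (fst q))"

definition hstrip :: "pt set \<Rightarrow> pt \<Rightarrow> pt \<Rightarrow> bool" where
  "hstrip T p q \<longleftrightarrow> p \<in> T \<and> q \<in> T \<and> p \<noteq> q \<and> empty_rect T p q \<and>
     \<not> (\<exists>t\<in>T. min (snd p) (snd q) < snd t \<and> snd t < max (snd p) (snd q))"

definition is_strip :: "pt set \<Rightarrow> pt \<Rightarrow> pt \<Rightarrow> bool" where
  "is_strip T p q \<longleftrightarrow> vstrip T p q \<or> hstrip T p q"

definition pos_slope :: "pt \<Rightarrow> pt \<Rightarrow> bool" where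
  "pos_slope p q \<longleftrightarrow> (fst p - fst q) * (snd p - snd q) > 0"

text \<open>The boundary of R(p,q) as directed grid edges, oriented clockwise
  (y axis pointing up: top side left-to-right, right side downwards,
   bottom side right-to-left, left side upwards).\<close>
definition cw_boundary :: "pt set \<Rightarrow> pt \<Rightarrow> pt \<Rightarrow> (pt \<times> pt) set" where
  "cw_boundary T p q =
    (let a = min (fst p) (fst q); b = max (fst p) (fst q);
         c = min (snd p) (snd q); d = max (snd p) (snd q) in
     {(u,v). grid_edge T u v \<and>
       ((snd u = d \<and> snd v = d \<and> a \<le> fst u \<and> fst u < fst v \<and> fst v \<le> b) \<or>
        (fst u = b \<and> fst v = b \<and> c \<le> snd v \<and> snd v < snd u \<and> snd u \<le> d) \<or>
        (snd u = c \<and> snd v = c \<and> a \<le> fst v \<and> fst v < fst u \<and> fst u \<le> b) \<or>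
        (fst u = a \<and> fst v = a \<and> c \<le> snd u \<and> snd u < snd v \<and> snd v \<le> d))})"

definition ccw_boundary :: "pt set \<Rightarrow> pt \<Rightarrow> pt \<Rightarrow> (pt \<times> pt) set" where
  "ccw_boundary T p q = converse (cw_boundary T p q)"

definition cw_in :: "pt set \<Rightarrow> (pt \<times> pt) set \<Rightarrow> pt \<Rightarrow> pt \<Rightarrow> bool" where
  "cw_in T N p q \<longleftrightarrow> cw_boundary T p q \<subseteq> N"

definition ccw_in :: "pt set \<Rightarrow> (pt \<times> pt) set \<Rightarrow> pt \<Rightarrow> pt \<Rightarrow> bool" where
  "ccw_in T N p q \<longleftrightarrow> ccw_boundary T p q \<subseteq> N"

definition boundary_directed :: "pt set \<Rightarrow> (pt \<times> pt) set \<Rightarrow> pt \<Rightarrow> pt \<Rightarrow> bool" where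
  "boundary_directed T N p q \<longleftrightarrow> cw_in T N p q \<or> ccw_in T N p q"

definition compatible :: "pt set \<Rightarrow> (pt \<times> pt) set \<Rightarrow> pt \<Rightarrow> pt \<Rightarrow> pt \<Rightarrow> pt \<Rightarrow> bool" where
  "compatible T N p1 q1 p2 q2 \<longleftrightarrow>
     (pos_slope p1 q1 = pos_slope p2 q2 \<and>
        ((cw_in T N p1 q1 \<and> cw_in T N p2 q2) \<or> (ccw_in T N p1 q1 \<and> ccw_in T N p2 q2))) \<or>
     (pos_slope p1 q1 \<noteq> pos_slope p2 q2 \<and>
        ((cw_in T N p1 q1 \<and> ccw_in T N p2 q2) \<or> (ccw_in T N p1 q1 \<and> cw_in T N p2 q2)))"

definition P24 :: "pt set \<Rightarrow> pt set" where
  "P24 T = {t\<in>T. Q2 t \<inter> T = {t} \<and> Q4 t \<inter> T = {t}}"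

definition P13 :: "pt set \<Rightarrow> pt set" where
  "P13 T = {t\<in>T. Q1 t \<inter> T = {t} \<and> Q3 t \<inter> T = {t}}"

definition consec :: "pt set \<Rightarrow> pt \<Rightarrow> pt \<Rightarrow> bool" where
  "consec P p q \<longleftrightarrow> p \<in> P \<and> q \<in> P \<and> fst p < fst q \<and>
     \<not> (\<exists>r\<in>P. fst p < fst r \<and> fst r < fst q)"

definition blocks :: "pt set \<Rightarrow> pt set set" where
  "blocks T =
    (if P24 T \<noteq> {} then
       {T \<inter> Q3 p | p. p \<in> P24 T \<and> (\<forall>r\<in>P24 T. fst p \<le> fst r)} \<union>
       {T \<inter> rect p q | p q. consec (P24 T) p q} \<union>
       {T \<inter> Q1 p | p. p \<in> P24 T \<and> (\<forall>r\<in>P24 T. fst r \<le> fst p)}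
     else if P13 T \<noteq> {} then
       {T \<inter> Q2 p | p. p \<in> P13 T \<and> (\<forall>r\<in>P13 T. fst p \<le> fst r)} \<union>
       {T \<inter> rect p q | p q. consec (P13 T) p q} \<union>
       {T \<inter> Q4 p | p. p \<in> P13 T \<and> (\<forall>r\<in>P13 T. fst r \<le> fst p)}
     else {T})"

end

theory Submission
  imports Defs
begin


definition nx :: "pt set \<Rightarrow> pt \<Rightarrow> real" where "nx T t = Min {x\<in>fst ` T. x > fst t}"
definition px :: "pt set \<Rightarrow> pt \<Rightarrow> real" where "px T t = Max {x\<in>fst ` T. x < fst t}"
definition ny :: "pt set \<Rightarrow> pt \<Rightarrow> real" where "ny T t = Min {y\<in>snd ` T. y > snd t}"
definition py :: "pt set \<Rightarrow> pt \<Rightarrow> real" where "py T t = Max {y\<in>snd ` T. y < snd t}"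

definition rt where "rt T t = (nx T t, snd t)"
definition lf where "lf T t = (px T t, snd t)"
definition up where "up T t = (fst t, ny T t)"
definition dn where "dn T t = (fst t, py T t)"

lemma nx_props:
  assumes "finite T" "u \<in> T" "fst u > fst t"
  shows "nx T t \<in> fst ` T" "nx T t > fst t" "\<And>x. x \<in> fst ` T \<Longrightarrow> x > fst t \<Longrightarrow> nx T t \<le> x"
proof -
  have f: "finite {x\<in>fst ` T. x > fst t}" using assms(1) by simp
  have ne: "{x\<in>fst ` T. x > fst t} \<noteq> {}" using assms(2,3) by blast
  have "nx T t \<in> {x\<in>fst ` T. x > fst t}" unfolding nx_def using Min_in[OF f ne] .
  then show "nx T t \<in> fst ` T" "nx T t > fst t" by simp_all
  show "\<And>x. x \<in> fst ` T \<Longrightarrow> x > fst t \<Longrightarrow> nx T t \<le> x" unfolding nx_def by (rule Min_le[OF f]) simp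
qed

lemma px_props:
  assumes "finite T" "u \<in> T" "fst u < fst t"
  shows "px T t \<in> fst ` T" "px T t < fst t" "\<And>x. x \<in> fst ` T \<Longrightarrow> x < fst t \<Longrightarrow> x \<le> px T t"
proof -
  have f: "finite {x\<in>fst ` T. x < fst t}" using assms(1) by simp
  have ne: "{x\<in>fst ` T. x < fst t} \<noteq> {}" using assms(2,3) by blast
  have "px T t \<in> {x\<in>fst ` T. x < fst t}" unfolding px_def using Max_in[OF f ne] .
  then show "px T t \<in> fst ` T" "px T t < fst t" by simp_all
  show "\<And>x. x \<in> fst ` T \<Longrightarrow> x < fst t \<Longrightarrow> x \<le> px T t" unfolding px_def by (rule Max_ge[OF f]) simp
qed

lemma ny_props:
  assumes "finite T" "u \<in> T" "snd u > snd t"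
  shows "ny T t \<in> snd ` T" "ny T t > snd t" "\<And>x. x \<in> snd ` T \<Longrightarrow> x > snd t \<Longrightarrow> ny T t \<le> x"
proof -
  have f: "finite {x\<in>snd ` T. x > snd t}" using assms(1) by simp
  have ne: "{x\<in>snd ` T. x > snd t} \<noteq> {}" using assms(2,3) by blast
  have "ny T t \<in> {x\<in>snd ` T. x > snd t}" unfolding ny_def using Min_in[OF f ne] .
  then show "ny T t \<in> snd ` T" "ny T t > snd t" by simp_all
  show "\<And>x. x \<in> snd ` T \<Longrightarrow> x > snd t \<Longrightarrow> ny T t \<le> x" unfolding ny_def by (rule Min_le[OF f]) simp
qed

lemma py_props:
  assumes "finite T" "u \<in> T" "snd u < snd t"
  shows "py T t \<in> snd ` T" "py T t < snd t" "\<And>x. x \<in> snd ` T \<Longrightarrow> x < snd t \<Longrightarrow> x \<le> py T t"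
proof -
  have f: "finite {x\<in>snd ` T. x < snd t}" using assms(1) by simp
  have ne: "{x\<in>snd ` T. x < snd t} \<noteq> {}" using assms(2,3) by blast
  have "py T t \<in> {x\<in>snd ` T. x < snd t}" unfolding py_def using Max_in[OF f ne] .
  then show "py T t \<in> snd ` T" "py T t < snd t" by simp_all
  show "\<And>x. x \<in> snd ` T \<Longrightarrow> x < snd t \<Longrightarrow> x \<le> py T t" unfolding py_def by (rule Max_ge[OF f]) simp
qed

lemma ge_rt: assumes "finite T" "t \<in> T" "u \<in> T" "fst u > fst t" shows "grid_edge T t (rt T t)"
proof -
  note p = nx_props[OF assms(1,3,4)]
  have e1: "min (fst t) (nx T t) = fst t" "max (fst t) (nx T t) = nx T t" using p(2) by auto
  have nb: "\<not> (\<exists>x\<in>fst ` T. min (fst t) (nx T t) < x \<and> x < max (fst t) (nx T t))"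
    unfolding e1 using p(3) by (force simp: not_less)
  have "fst t \<in> fst ` T" "snd t \<in> snd ` T" using assms(2) by auto
  then show ?thesis using p nb unfolding grid_edge_def rt_def by (intro disjI1) simp
qed

lemma ge_lf: assumes "finite T" "t \<in> T" "u \<in> T" "fst u < fst t" shows "grid_edge T t (lf T t)"
proof -
  note p = px_props[OF assms(1,3,4)]
  have e1: "min (fst t) (px T t) = px T t" "max (fst t) (px T t) = fst t" using p(2) by auto
  have nb: "\<not> (\<exists>x\<in>fst ` T. min (fst t) (px T t) < x \<and> x < max (fst t) (px T t))"
    unfolding e1 using p(3) by (force simp: not_less)
  have "fst t \<in> fst ` T" "snd t \<in> snd ` T" using assms(2) by auto
  then show ?thesis using p nb unfolding grid_edge_def lf_def by (intro disjI1) simp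
qed

lemma ge_up: assumes "finite T" "t \<in> T" "u \<in> T" "snd u > snd t" shows "grid_edge T t (up T t)"
proof -
  note p = ny_props[OF assms(1,3,4)]
  have e1: "min (snd t) (ny T t) = snd t" "max (snd t) (ny T t) = ny T t" using p(2) by auto
  have nb: "\<not> (\<exists>x\<in>snd ` T. min (snd t) (ny T t) < x \<and> x < max (snd t) (ny T t))"
    unfolding e1 using p(3) by (force simp: not_less)
  have "snd t \<in> snd ` T" "fst t \<in> fst ` T" using assms(2) by auto
  then show ?thesis using p nb unfolding grid_edge_def up_def by (intro disjI2) simp
qed

lemma ge_dn: assumes "finite T" "t \<in> T" "u \<in> T" "snd u < snd t" shows "grid_edge T t (dn T t)"
proof -
  note p = py_props[OF assms(1,3,4)]
  have e1: "min (snd t) (py T t) = py T t" "max (snd t) (py T t) = snd t" using p(2) by auto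
  have nb: "\<not> (\<exists>x\<in>snd ` T. min (snd t) (py T t) < x \<and> x < max (snd t) (py T t))"
    unfolding e1 using p(3) by (force simp: not_less)
  have "snd t \<in> snd ` T" "fst t \<in> fst ` T" using assms(2) by auto
  then show ?thesis using p nb unfolding grid_edge_def dn_def by (intro disjI2) simp
qed

lemma grid_edge_sym1: "grid_edge T u v \<Longrightarrow> grid_edge T v u"
  unfolding grid_edge_def
  apply (elim disjE conjE)
   apply (rule disjI1, intro conjI; simp add: min.commute max.commute)
  apply (rule disjI2, intro conjI; simp add: min.commute max.commute)
  done

lemma grid_edge_sym: "grid_edge T u v \<longleftrightarrow> grid_edge T v u"
  using grid_edge_sym1 by blast



definition phi :: "pt set \<Rightarrow> (pt \<times> pt) set \<Rightarrow> pt \<Rightarrow> pt \<Rightarrow> bool" where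
  "phi T N p q \<longleftrightarrow> (cw_in T N p q \<longleftrightarrow> pos_slope p q)"

lemma cw_up_L:
  assumes "finite T" "t \<in> T" "a \<in> T" "snd t < snd a" "fst t < fst a"
  shows "(t, up T t) \<in> cw_boundary T t a"
proof -
  have g: "grid_edge T t (up T t)" by (rule ge_up[OF assms(1,2,3,4)])
  have g2: "grid_edge T (up T t) t" using g grid_edge_sym by blast
  note p = ny_props[OF assms(1,3,4)]
  have b: "snd a \<in> snd ` T" using assms(3) by simp
  have q: "ny T t \<le> snd a" using p(3)[OF b] assms(4) by simp
  show ?thesis using g g2 p(2) q assms(4,5) unfolding cw_boundary_def Let_def up_def
    by (simp add: min_def max_def)
qed

lemma cw_up_R:
  assumes "finite T" "t \<in> T" "a \<in> T" "snd t < snd a" "fst a < fst t"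
  shows "(up T t, t) \<in> cw_boundary T t a"
proof -
  have g: "grid_edge T t (up T t)" by (rule ge_up[OF assms(1,2,3,4)])
  have g2: "grid_edge T (up T t) t" using g grid_edge_sym by blast
  note p = ny_props[OF assms(1,3,4)]
  have b: "snd a \<in> snd ` T" using assms(3) by simp
  have q: "ny T t \<le> snd a" using p(3)[OF b] assms(4) by simp
  show ?thesis using g g2 p(2) q assms(4,5) unfolding cw_boundary_def Let_def up_def
    by (simp add: min_def max_def)
qed

lemma cw_dn_L:
  assumes "finite T" "t \<in> T" "a \<in> T" "snd a < snd t" "fst t < fst a"
  shows "(dn T t, t) \<in> cw_boundary T t a"
proof -
  have g: "grid_edge T t (dn T t)" by (rule ge_dn[OF assms(1,2,3,4)])
  have g2: "grid_edge T (dn T t) t" using g grid_edge_sym by blast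
  note p = py_props[OF assms(1,3,4)]
  have b: "snd a \<in> snd ` T" using assms(3) by simp
  have q: "snd a \<le> py T t" using p(3)[OF b] assms(4) by simp
  show ?thesis using g g2 p(2) q assms(4,5) unfolding cw_boundary_def Let_def dn_def
    by (simp add: min_def max_def)
qed

lemma cw_dn_R:
  assumes "finite T" "t \<in> T" "a \<in> T" "snd a < snd t" "fst a < fst t"
  shows "(t, dn T t) \<in> cw_boundary T t a"
proof -
  have g: "grid_edge T t (dn T t)" by (rule ge_dn[OF assms(1,2,3,4)])
  have g2: "grid_edge T (dn T t) t" using g grid_edge_sym by blast
  note p = py_props[OF assms(1,3,4)]
  have b: "snd a \<in> snd ` T" using assms(3) by simp
  have q: "snd a \<le> py T t" using p(3)[OF b] assms(4) by simp
  show ?thesis using g g2 p(2) q assms(4,5) unfolding cw_boundary_def Let_def dn_def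
    by (simp add: min_def max_def)
qed

lemma cw_rt_B:
  assumes "finite T" "t \<in> T" "a \<in> T" "fst t < fst a" "snd t < snd a"
  shows "(rt T t, t) \<in> cw_boundary T t a"
proof -
  have g: "grid_edge T t (rt T t)" by (rule ge_rt[OF assms(1,2,3,4)])
  have g2: "grid_edge T (rt T t) t" using g grid_edge_sym by blast
  note p = nx_props[OF assms(1,3,4)]
  have b: "fst a \<in> fst ` T" using assms(3) by simp
  have q: "nx T t \<le> fst a" using p(3)[OF b] assms(4) by simp
  show ?thesis using g g2 p(2) q assms(4,5) unfolding cw_boundary_def Let_def rt_def
    by (simp add: min_def max_def)
qed

lemma cw_rt_T:
  assumes "finite T" "t \<in> T" "a \<in> T" "fst t < fst a" "snd a < snd t"
  shows "(t, rt T t) \<in> cw_boundary T t a"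
proof -
  have g: "grid_edge T t (rt T t)" by (rule ge_rt[OF assms(1,2,3,4)])
  have g2: "grid_edge T (rt T t) t" using g grid_edge_sym by blast
  note p = nx_props[OF assms(1,3,4)]
  have b: "fst a \<in> fst ` T" using assms(3) by simp
  have q: "nx T t \<le> fst a" using p(3)[OF b] assms(4) by simp
  show ?thesis using g g2 p(2) q assms(4,5) unfolding cw_boundary_def Let_def rt_def
    by (simp add: min_def max_def)
qed

lemma cw_lf_B:
  assumes "finite T" "t \<in> T" "a \<in> T" "fst a < fst t" "snd t < snd a"
  shows "(t, lf T t) \<in> cw_boundary T t a"
proof -
  have g: "grid_edge T t (lf T t)" by (rule ge_lf[OF assms(1,2,3,4)])
  have g2: "grid_edge T (lf T t) t" using g grid_edge_sym by blast
  note p = px_props[OF assms(1,3,4)]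
  have b: "fst a \<in> fst ` T" using assms(3) by simp
  have q: "fst a \<le> px T t" using p(3)[OF b] assms(4) by simp
  show ?thesis using g g2 p(2) q assms(4,5) unfolding cw_boundary_def Let_def lf_def
    by (simp add: min_def max_def)
qed

lemma cw_lf_T:
  assumes "finite T" "t \<in> T" "a \<in> T" "fst a < fst t" "snd a < snd t"
  shows "(lf T t, t) \<in> cw_boundary T t a"
proof -
  have g: "grid_edge T t (lf T t)" by (rule ge_lf[OF assms(1,2,3,4)])
  have g2: "grid_edge T (lf T t) t" using g grid_edge_sym by blast
  note p = px_props[OF assms(1,3,4)]
  have b: "fst a \<in> fst ` T" using assms(3) by simp
  have q: "fst a \<le> px T t" using p(3)[OF b] assms(4) by simp
  show ?thesis using g g2 p(2) q assms(4,5) unfolding cw_boundary_def Let_def lf_def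
    by (simp add: min_def max_def)
qed

lemma K_gen:
  assumes "oriented_subnetwork T N" "boundary_directed T N t a" "(x,y) \<in> cw_boundary T t a"
  shows "((x,y) \<in> N \<longleftrightarrow> cw_in T N t a) \<and> ((y,x) \<in> N \<longleftrightarrow> \<not> cw_in T N t a)"
proof (cases "cw_in T N t a")
  case True
  then have "(x,y) \<in> N" using assms(3) unfolding cw_in_def by blast
  then have "(y,x) \<notin> N" using assms(1) unfolding oriented_subnetwork_def by blast
  then show ?thesis using True \<open>(x,y) \<in> N\<close> by blast
next
  case False
  then have "ccw_in T N t a" using assms(2) unfolding boundary_directed_def by blast
  then have "(y,x) \<in> N" using assms(3) unfolding ccw_in_def ccw_boundary_def by blast
  then have "(x,y) \<notin> N" using assms(1) unfolding oriented_subnetwork_def by blast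
  then show ?thesis using False \<open>(y,x) \<in> N\<close> by blast
qed

lemma excl_gen:
  assumes "oriented_subnetwork T N" "(x,y) \<in> cw_boundary T t a"
  shows "\<not> (cw_in T N t a \<and> ccw_in T N t a)"
  using assms unfolding oriented_subnetwork_def cw_in_def ccw_in_def ccw_boundary_def by blast

lemma pos_slope_iff: "pos_slope p q \<longleftrightarrow> (fst p < fst q \<and> snd p < snd q) \<or> (fst q < fst p \<and> snd q < snd p)"
  unfolding pos_slope_def zero_less_mult_iff by auto



lemma K_up:
  assumes or: "oriented_subnetwork T N" and bd: "boundary_directed T N t a"
    and "finite T" "t \<in> T" "a \<in> T" "snd t < snd a" "fst t \<noteq> fst a"
  shows "((t, up T t) \<in> N \<longleftrightarrow> phi T N t a) \<and> ((up T t, t) \<in> N \<longleftrightarrow> \<not> phi T N t a)"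
proof (cases "fst t < fst a")
  case True
  have "pos_slope t a" using True assms(6) pos_slope_iff by auto
  then show ?thesis using K_gen[OF or bd cw_up_L[OF assms(3,4,5,6) True]] unfolding phi_def by blast
next
  case False
  then have F: "fst a < fst t" using assms(7) by linarith
  have "\<not> pos_slope t a" using F assms(6) pos_slope_iff by auto
  then show ?thesis using K_gen[OF or bd cw_up_R[OF assms(3,4,5,6) F]] unfolding phi_def by blast
qed

lemma K_dn:
  assumes or: "oriented_subnetwork T N" and bd: "boundary_directed T N t a"
    and "finite T" "t \<in> T" "a \<in> T" "snd a < snd t" "fst t \<noteq> fst a"
  shows "((t, dn T t) \<in> N \<longleftrightarrow> phi T N t a) \<and> ((dn T t, t) \<in> N \<longleftrightarrow> \<not> phi T N t a)"
proof (cases "fst t < fst a")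
  case True
  have "\<not> pos_slope t a" using True assms(6) pos_slope_iff by auto
  then show ?thesis using K_gen[OF or bd cw_dn_L[OF assms(3,4,5,6) True]] unfolding phi_def by blast
next
  case False
  then have F: "fst a < fst t" using assms(7) by linarith
  have "pos_slope t a" using F assms(6) pos_slope_iff by auto
  then show ?thesis using K_gen[OF or bd cw_dn_R[OF assms(3,4,5,6) F]] unfolding phi_def by blast
qed

lemma K_rt:
  assumes or: "oriented_subnetwork T N" and bd: "boundary_directed T N t a"
    and "finite T" "t \<in> T" "a \<in> T" "fst t < fst a" "snd t \<noteq> snd a"
  shows "((t, rt T t) \<in> N \<longleftrightarrow> \<not> phi T N t a) \<and> ((rt T t, t) \<in> N \<longleftrightarrow> phi T N t a)"
proof (cases "snd t < snd a")
  case True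
  have "pos_slope t a" using True assms(6) pos_slope_iff by auto
  then show ?thesis using K_gen[OF or bd cw_rt_B[OF assms(3,4,5,6) True]] unfolding phi_def by blast
next
  case False
  then have F: "snd a < snd t" using assms(7) by linarith
  have "\<not> pos_slope t a" using F assms(6) pos_slope_iff by auto
  then show ?thesis using K_gen[OF or bd cw_rt_T[OF assms(3,4,5,6) F]] unfolding phi_def by blast
qed

lemma K_lf:
  assumes or: "oriented_subnetwork T N" and bd: "boundary_directed T N t a"
    and "finite T" "t \<in> T" "a \<in> T" "fst a < fst t" "snd t \<noteq> snd a"
  shows "((t, lf T t) \<in> N \<longleftrightarrow> \<not> phi T N t a) \<and> ((lf T t, t) \<in> N \<longleftrightarrow> phi T N t a)"
proof (cases "snd t < snd a")
  case True
  have "\<not> pos_slope t a" using True assms(6) pos_slope_iff by auto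
  then show ?thesis using K_gen[OF or bd cw_lf_B[OF assms(3,4,5,6) True]] unfolding phi_def by blast
next
  case False
  then have F: "snd a < snd t" using assms(7) by linarith
  have "pos_slope t a" using F assms(6) pos_slope_iff by auto
  then show ?thesis using K_gen[OF or bd cw_lf_T[OF assms(3,4,5,6) F]] unfolding phi_def by blast
qed

definition S :: "pt list \<Rightarrow> real" where
  "S vs = sum_list (map (\<lambda>(u,v). l1 u v) (zip vs (tl vs)))"

lemma l1_tri: "l1 a c \<le> l1 a b + l1 b c"
  unfolding l1_def by linarith

lemma l1_sym: "l1 a b = l1 b a"
  unfolding l1_def by linarith

lemma l1_self: "l1 a a = 0"
  unfolding l1_def by simp

lemma S_cons2: "S (x # y # ys) = l1 x y + S (y # ys)"
  unfolding S_def by simp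

lemma S_single: "S [x] = 0"
  unfolding S_def by simp

lemma tri_path: "vs \<noteq> [] \<Longrightarrow> l1 (hd vs) (last vs) \<le> S vs"
proof (induction vs)
  case Nil then show ?case by simp
next
  case (Cons x vs)
  show ?case
  proof (cases vs)
    case Nil then show ?thesis by (simp add: S_single l1_self)
  next
    case (Cons y ys)
    have h: "l1 y (last vs) \<le> S vs" using Cons.IH Cons by simp
    have l: "last (x # vs) = last vs" using Cons by simp
    have "l1 x (last vs) \<le> l1 x y + l1 y (last vs)" by (rule l1_tri)
    then show ?thesis using h l Cons S_cons2[of x y ys] by simp
  qed
qed

lemma first_edge:
  assumes "vs \<noteq> []" "hd vs = p" "last vs = q" "p \<noteq> q"
    "\<forall>e\<in>set (zip vs (tl vs)). e \<in> N" "S vs \<le> l1 p q"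
  shows "\<exists>w. (p,w) \<in> N \<and> l1 p w + l1 w q = l1 p q"
proof -
  obtain vs' where vs: "vs = p # vs'" using assms(1,2) by (cases vs) auto
  have "vs' \<noteq> []" using vs assms(3,4) by auto
  then obtain w rest where vs': "vs' = w # rest" by (cases vs') auto
  have e: "(p,w) \<in> N" using assms(5) vs vs' by simp
  have "l1 w q \<le> S vs'" using tri_path[of vs'] vs' vs assms(3) by simp
  then have "l1 p w + l1 w q \<le> l1 p q" using assms(6) vs vs' S_cons2[of p w rest] by simp
  then show ?thesis using e l1_tri[of p q w] by (intro exI[of _ w]) simp
qed

lemma last_edge:
  "vs \<noteq> [] \<Longrightarrow> last vs = q \<Longrightarrow> hd vs \<noteq> q \<Longrightarrow> (\<forall>e\<in>set (zip vs (tl vs)). e \<in> N)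
   \<Longrightarrow> S vs \<le> l1 (hd vs) q \<Longrightarrow> \<exists>w. (w,q) \<in> N \<and> l1 (hd vs) w + l1 w q = l1 (hd vs) q"
proof (induction vs)
  case Nil then show ?case by simp
next
  case (Cons p vs')
  have "vs' \<noteq> []" using Cons.prems by auto
  then obtain w rest where vs': "vs' = w # rest" by (cases vs') auto
  have e: "(p,w) \<in> N" using Cons.prems(4) vs' by simp
  have Sv: "S (p # vs') = l1 p w + S vs'" using vs' S_cons2 by simp
  have tv: "l1 w q \<le> S vs'" using tri_path[of vs'] vs' Cons.prems(2) by simp
  show ?case
  proof (cases "w = q")
    case True
    then show ?thesis using e l1_self[of p] by (intro exI[of _ p]) simp
  next
    case False
    have "S vs' \<le> l1 w q" using Sv Cons.prems(5) l1_tri[of p q w] by simp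
    moreover have "\<forall>e\<in>set (zip vs' (tl vs')). e \<in> N" using Cons.prems(4) vs' by simp
    ultimately obtain w' where w': "(w',q) \<in> N" "l1 w w' + l1 w' q = l1 w q"
      using Cons.IH[OF \<open>vs' \<noteq> []\<close>] Cons.prems(2) False vs' by auto
    have "l1 p w' + l1 w' q = l1 p q"
      using l1_tri[of p w' w] l1_tri[of p q w'] w'(2) Sv tv Cons.prems(5) by simp
    then show ?thesis using w' by (intro exI[of _ w']) simp
  qed
qed

lemma l1_between:
  assumes "l1 p w + l1 w q = l1 p q"
  shows "min (fst p) (fst q) \<le> fst w \<and> fst w \<le> max (fst p) (fst q) \<and>
         min (snd p) (snd q) \<le> snd w \<and> snd w \<le> max (snd p) (snd q)"
  using assms unfolding l1_def by (simp add: min_def max_def abs_if split: if_splits)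



lemma step_dir:
  assumes fin: "finite T" and g: "grid_edge T p w" and l: "l1 p w + l1 w q = l1 p q"
  shows "(w = rt T p \<and> fst p < fst q) \<or> (w = lf T p \<and> fst q < fst p) \<or>
         (w = up T p \<and> snd p < snd q) \<or> (w = dn T p \<and> snd q < snd p)"
proof -
  note bw = l1_between[OF l]
  from g consider (h) "snd p = snd w" "fst w \<in> fst ` T" "fst p \<noteq> fst w"
      "\<not> (\<exists>x\<in>fst ` T. min (fst p) (fst w) < x \<and> x < max (fst p) (fst w))"
    | (v) "fst p = fst w" "snd w \<in> snd ` T" "snd p \<noteq> snd w"
      "\<not> (\<exists>y\<in>snd ` T. min (snd p) (snd w) < y \<and> y < max (snd p) (snd w))"
    unfolding grid_edge_def by blast
  then show ?thesis
  proof cases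
    case h
    obtain u where u: "u \<in> T" "fst u = fst w" using h(2) by auto
    show ?thesis
    proof (cases "fst p < fst w")
      case True
      note np = nx_props[OF fin u(1), of p]
      have a: "nx T p \<in> fst ` T" "fst p < nx T p" "nx T p \<le> fst w"
        using np u True h(2) by auto
      have "nx T p = fst w"
      proof (rule ccontr)
        assume "nx T p \<noteq> fst w"
        then have "nx T p < fst w" using a by simp
        then show False using h(4) a True by (auto simp: min_def max_def)
      qed
      then have "w = rt T p" using h(1) unfolding rt_def by (simp add: prod_eq_iff)
      moreover have "fst p < fst q" using bw True by (auto simp: min_def max_def split: if_splits)
      ultimately show ?thesis by blast
    next
      case False
      then have F: "fst w < fst p" using h(3) by linarith
      note np = px_props[OF fin u(1), of p]
      have a: "px T p \<in> fst ` T" "px T p < fst p" "fst w \<le> px T p"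
        using np u F h(2) by auto
      have "px T p = fst w"
      proof (rule ccontr)
        assume "px T p \<noteq> fst w"
        then have "fst w < px T p" using a by simp
        then show False using h(4) a F by (auto simp: min_def max_def)
      qed
      then have "w = lf T p" using h(1) unfolding lf_def by (simp add: prod_eq_iff)
      moreover have "fst q < fst p" using bw F by (auto simp: min_def max_def split: if_splits)
      ultimately show ?thesis by blast
    qed
  next
    case v
    obtain u where u: "u \<in> T" "snd u = snd w" using v(2) by auto
    show ?thesis
    proof (cases "snd p < snd w")
      case True
      note np = ny_props[OF fin u(1), of p]
      have a: "ny T p \<in> snd ` T" "snd p < ny T p" "ny T p \<le> snd w"
        using np u True v(2) by auto
      have "ny T p = snd w"
      proof (rule ccontr)
        assume "ny T p \<noteq> snd w"
        then have "ny T p < snd w" using a by simp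
        then show False using v(4) a True by (auto simp: min_def max_def)
      qed
      then have "w = up T p" using v(1) unfolding up_def by (simp add: prod_eq_iff)
      moreover have "snd p < snd q" using bw True by (auto simp: min_def max_def split: if_splits)
      ultimately show ?thesis by blast
    next
      case False
      then have F: "snd w < snd p" using v(3) by linarith
      note np = py_props[OF fin u(1), of p]
      have a: "py T p \<in> snd ` T" "py T p < snd p" "snd w \<le> py T p"
        using np u F v(2) by auto
      have "py T p = snd w"
      proof (rule ccontr)
        assume "py T p \<noteq> snd w"
        then have "snd w < py T p" using a by simp
        then show False using v(4) a F by (auto simp: min_def max_def)
      qed
      then have "w = dn T p" using v(1) unfolding dn_def by (simp add: prod_eq_iff)
      moreover have "snd q < snd p" using bw F by (auto simp: min_def max_def split: if_splits)
      ultimately show ?thesis by blast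
    qed
  qed
qed

definition dirok :: "pt set \<Rightarrow> pt \<Rightarrow> pt \<Rightarrow> pt \<Rightarrow> bool" where
  "dirok T t u w \<longleftrightarrow> (w = rt T t \<and> fst t < fst u) \<or> (w = lf T t \<and> fst u < fst t) \<or>
         (w = up T t \<and> snd t < snd u) \<or> (w = dn T t \<and> snd u < snd t)"

lemma path_out:
  assumes bm: "bidirected_manhattan T N" and fin: "finite T" and "t \<in> T" "u \<in> T" "t \<noteq> u"
  shows "\<exists>w. (t,w) \<in> N \<and> dirok T t u w"
proof -
  have mp: "manhattan_path N t u" using bm assms unfolding bidirected_manhattan_def by blast
  then obtain vs where vs: "vs \<noteq> []" "hd vs = t" "last vs = u" "\<forall>e\<in>set (zip vs (tl vs)). e \<in> N"
    "S vs = l1 t u" unfolding manhattan_path_def S_def by blast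
  obtain w where w: "(t,w) \<in> N" "l1 t w + l1 w u = l1 t u"
    using first_edge[OF vs(1,2,3) assms(5) vs(4)] vs(5) by auto
  have "grid_edge T t w" using w(1) bm unfolding bidirected_manhattan_def oriented_subnetwork_def by blast
  then show ?thesis using step_dir[OF fin _ w(2)] w(1) unfolding dirok_def by blast
qed

lemma path_in:
  assumes bm: "bidirected_manhattan T N" and fin: "finite T" and "t \<in> T" "u \<in> T" "t \<noteq> u"
  shows "\<exists>w. (w,t) \<in> N \<and> dirok T t u w"
proof -
  have mp: "manhattan_path N u t" using bm assms(3,4,5) unfolding bidirected_manhattan_def by metis
  then obtain vs where vs: "vs \<noteq> []" "hd vs = u" "last vs = t" "\<forall>e\<in>set (zip vs (tl vs)). e \<in> N"
    "S vs = l1 u t" unfolding manhattan_path_def S_def by blast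
  obtain w where w: "(w,t) \<in> N" "l1 u w + l1 w t = l1 u t"
    using last_edge[OF vs(1,3) _ vs(4)] vs(2,5) assms(5) by auto
  have "grid_edge T w t" using w(1) bm unfolding bidirected_manhattan_def oriented_subnetwork_def by blast
  then have g: "grid_edge T t w" using grid_edge_sym by blast
  have "l1 t w + l1 w u = l1 t u" using w(2) l1_sym by (metis add.commute)
  then show ?thesis using step_dir[OF fin g] w(1) unfolding dirok_def by blast
qed



lemma dirok_Q1: "dirok T t u w \<Longrightarrow> fst t < fst u \<Longrightarrow> snd t < snd u \<Longrightarrow> w = rt T t \<or> w = up T t"
  unfolding dirok_def by auto
lemma dirok_Q2: "dirok T t u w \<Longrightarrow> fst u < fst t \<Longrightarrow> snd t < snd u \<Longrightarrow> w = lf T t \<or> w = up T t"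
  unfolding dirok_def by auto
lemma dirok_Q3: "dirok T t u w \<Longrightarrow> fst u < fst t \<Longrightarrow> snd u < snd t \<Longrightarrow> w = lf T t \<or> w = dn T t"
  unfolding dirok_def by auto
lemma dirok_Q4: "dirok T t u w \<Longrightarrow> fst t < fst u \<Longrightarrow> snd u < snd t \<Longrightarrow> w = rt T t \<or> w = dn T t"
  unfolding dirok_def by auto

lemma gpD: "general_position T \<Longrightarrow> a \<in> T \<Longrightarrow> b \<in> T \<Longrightarrow> a \<noteq> b \<Longrightarrow> fst a \<noteq> fst b \<and> snd a \<noteq> snd b"
  unfolding general_position_def by blast

lemma gp_fin: "general_position T \<Longrightarrow> finite T"
  unfolding general_position_def by blast

lemma L_same:
  assumes or: "oriented_subnetwork T N" and gp: "general_position T"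
    and T: "t \<in> T" "a \<in> T" "b \<in> T" "t \<noteq> a" "t \<noteq> b"
    and bda: "boundary_directed T N t a" and bdb: "boundary_directed T N t b"
    and side: "(snd t < snd a \<and> snd t < snd b) \<or> (snd a < snd t \<and> snd b < snd t) \<or>
       (fst t < fst a \<and> fst t < fst b) \<or> (fst a < fst t \<and> fst b < fst t)"
  shows "phi T N t a = phi T N t b"
proof -
  have fin: "finite T" using gp gp_fin by blast
  have da: "fst t \<noteq> fst a" "snd t \<noteq> snd a" using gpD[OF gp T(1,2,4)] by auto
  have db: "fst t \<noteq> fst b" "snd t \<noteq> snd b" using gpD[OF gp T(1,3,5)] by auto
  from side show ?thesis
  proof (elim disjE conjE)
    assume "snd t < snd a" "snd t < snd b"
    then show ?thesis using K_up[OF or bda fin T(1,2) _ da(1)] K_up[OF or bdb fin T(1,3) _ db(1)] by blast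
  next
    assume "snd a < snd t" "snd b < snd t"
    then show ?thesis using K_dn[OF or bda fin T(1,2) _ da(1)] K_dn[OF or bdb fin T(1,3) _ db(1)] by blast
  next
    assume "fst t < fst a" "fst t < fst b"
    then show ?thesis using K_rt[OF or bda fin T(1,2) _ da(2)] K_rt[OF or bdb fin T(1,3) _ db(2)] by blast
  next
    assume "fst a < fst t" "fst b < fst t"
    then show ?thesis using K_lf[OF or bda fin T(1,2) _ da(2)] K_lf[OF or bdb fin T(1,3) _ db(2)] by blast
  qed
qed

lemma notP24_wit:
  assumes "t \<in> T" "t \<notin> P24 T"
  shows "\<exists>u\<in>T. u \<noteq> t \<and> (u \<in> Q2 t \<or> u \<in> Q4 t)"
proof -
  have "t \<in> Q2 t" "t \<in> Q4 t" unfolding Q2_def Q4_def by auto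
  then show ?thesis using assms unfolding P24_def by blast
qed

lemma notP13_wit:
  assumes "t \<in> T" "t \<notin> P13 T"
  shows "\<exists>u\<in>T. u \<noteq> t \<and> (u \<in> Q1 t \<or> u \<in> Q3 t)"
proof -
  have "t \<in> Q1 t" "t \<in> Q3 t" unfolding Q1_def Q3_def by auto
  then show ?thesis using assms unfolding P13_def by blast
qed

lemma opp_core:
  assumes "(t,w1) \<in> N" "(w2,t) \<in> N"
    "w1 = x1 \<or> w1 = y1" "w2 = x1 \<or> w2 = y1"
    "((t,x1) \<in> N \<longleftrightarrow> P) \<and> ((x1,t) \<in> N \<longleftrightarrow> \<not> P)"
    "((t,y1) \<in> N \<longleftrightarrow> \<not> Q) \<and> ((y1,t) \<in> N \<longleftrightarrow> Q)"
  shows "P = Q"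
  using assms by blast

lemma L_opp:
  assumes bm: "bidirected_manhattan T N" and gp: "general_position T"
    and T: "t \<in> T" "a \<in> T" "b \<in> T" "t \<noteq> a" "t \<noteq> b"
    and bda: "boundary_directed T N t a" and bdb: "boundary_directed T N t b"
    and n24: "t \<notin> P24 T" and n13: "t \<notin> P13 T"
  shows "phi T N t a = phi T N t b"
proof -
  have or: "oriented_subnetwork T N" using bm unfolding bidirected_manhattan_def by blast
  have fin: "finite T" using gp gp_fin by blast
  have da: "fst t \<noteq> fst a" "snd t \<noteq> snd a" using gpD[OF gp T(1,2,4)] by auto
  have db: "fst t \<noteq> fst b" "snd t \<noteq> snd b" using gpD[OF gp T(1,3,5)] by auto
  show ?thesis
  proof (cases "(snd t < snd a \<and> snd t < snd b) \<or> (snd a < snd t \<and> snd b < snd t) \<or>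
       (fst t < fst a \<and> fst t < fst b) \<or> (fst a < fst t \<and> fst b < fst t)")
    case True
    then show ?thesis by (rule L_same[OF or gp T bda bdb])
  next
    case False
    obtain u24 where u24: "u24 \<in> T" "u24 \<noteq> t" "u24 \<in> Q2 t \<or> u24 \<in> Q4 t"
      using notP24_wit[OF T(1) n24] by blast
    obtain u13 where u13: "u13 \<in> T" "u13 \<noteq> t" "u13 \<in> Q1 t \<or> u13 \<in> Q3 t"
      using notP13_wit[OF T(1) n13] by blast
    have d24: "fst t \<noteq> fst u24" "snd t \<noteq> snd u24" using gpD[OF gp T(1) u24(1)] u24(2) by auto
    have d13: "fst t \<noteq> fst u13" "snd t \<noteq> snd u13" using gpD[OF gp T(1) u13(1)] u13(2) by auto
    have q24: "(fst u24 < fst t \<and> snd t < snd u24) \<or> (fst t < fst u24 \<and> snd u24 < snd t)"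
      using u24(3) d24 unfolding Q2_def Q4_def by auto
    have q13: "(fst t < fst u13 \<and> snd t < snd u13) \<or> (fst u13 < fst t \<and> snd u13 < snd t)"
      using u13(3) d13 unfolding Q1_def Q3_def by auto
    have nu13: "t \<noteq> u13" using u13(2) by blast
    have nu24: "t \<noteq> u24" using u24(2) by blast
    obtain w1 where w1: "(t,w1) \<in> N" "dirok T t u13 w1" using path_out[OF bm fin T(1) u13(1) nu13] by blast
    obtain w2 where w2: "(w2,t) \<in> N" "dirok T t u13 w2" using path_in[OF bm fin T(1) u13(1) nu13] by blast
    obtain w3 where w3: "(t,w3) \<in> N" "dirok T t u24 w3" using path_out[OF bm fin T(1) u24(1) nu24] by blast
    obtain w4 where w4: "(w4,t) \<in> N" "dirok T t u24 w4" using path_in[OF bm fin T(1) u24(1) nu24] by blast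
    have sa: "fst a < fst t \<or> fst t < fst a" using da by linarith
    have sb: "snd a < snd t \<or> snd t < snd a" using da by linarith
    have sc: "fst b < fst t \<or> fst t < fst b" using db by linarith
    have sd: "snd b < snd t \<or> snd t < snd b" using db by linarith
    have conf: "(fst a < fst t \<and> snd t < snd a \<and> fst t < fst b \<and> snd b < snd t) \<or>
                (fst b < fst t \<and> snd t < snd b \<and> fst t < fst a \<and> snd a < snd t) \<or>
                (fst a < fst t \<and> snd a < snd t \<and> fst t < fst b \<and> snd t < snd b) \<or>
                (fst b < fst t \<and> snd b < snd t \<and> fst t < fst a \<and> snd t < snd a)"
      using False sa sb sc sd by blast
    then show ?thesis
    proof (elim disjE conjE)
      assume a1: "fst a < fst t" "snd t < snd a" and b1: "fst t < fst b" "snd b < snd t"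
      note Ka = K_up[OF or bda fin T(1,2) a1(2) da(1)] K_lf[OF or bda fin T(1,2) a1(1) da(2)]
      note Kb = K_dn[OF or bdb fin T(1,3) b1(2) db(1)] K_rt[OF or bdb fin T(1,3) b1(1) db(2)]
      from q13 show ?thesis
      proof
        assume q: "fst t < fst u13 \<and> snd t < snd u13"
        have h: "w1 = up T t \<or> w1 = rt T t" "w2 = up T t \<or> w2 = rt T t"
          using dirok_Q1[OF w1(2)] dirok_Q1[OF w2(2)] q by auto
        then show ?thesis using opp_core[OF w1(1) w2(1) h(1) h(2) Ka(1) Kb(2)] by simp
      next
        assume q: "fst u13 < fst t \<and> snd u13 < snd t"
        have h: "w1 = dn T t \<or> w1 = lf T t" "w2 = dn T t \<or> w2 = lf T t"
          using dirok_Q3[OF w1(2)] dirok_Q3[OF w2(2)] q by auto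
        then show ?thesis using opp_core[OF w1(1) w2(1) h(1) h(2) Kb(1) Ka(2)] by simp
      qed
    next
      assume b1: "fst b < fst t" "snd t < snd b" and a1: "fst t < fst a" "snd a < snd t"
      note Kb = K_up[OF or bdb fin T(1,3) b1(2) db(1)] K_lf[OF or bdb fin T(1,3) b1(1) db(2)]
      note Ka = K_dn[OF or bda fin T(1,2) a1(2) da(1)] K_rt[OF or bda fin T(1,2) a1(1) da(2)]
      from q13 show ?thesis
      proof
        assume q: "fst t < fst u13 \<and> snd t < snd u13"
        have h: "w1 = up T t \<or> w1 = rt T t" "w2 = up T t \<or> w2 = rt T t"
          using dirok_Q1[OF w1(2)] dirok_Q1[OF w2(2)] q by auto
        then show ?thesis using opp_core[OF w1(1) w2(1) h(1) h(2) Kb(1) Ka(2)] by simp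
      next
        assume q: "fst u13 < fst t \<and> snd u13 < snd t"
        have h: "w1 = dn T t \<or> w1 = lf T t" "w2 = dn T t \<or> w2 = lf T t"
          using dirok_Q3[OF w1(2)] dirok_Q3[OF w2(2)] q by auto
        then show ?thesis using opp_core[OF w1(1) w2(1) h(1) h(2) Ka(1) Kb(2)] by simp
      qed
    next
      assume a1: "fst a < fst t" "snd a < snd t" and b1: "fst t < fst b" "snd t < snd b"
      note Ka = K_dn[OF or bda fin T(1,2) a1(2) da(1)] K_lf[OF or bda fin T(1,2) a1(1) da(2)]
      note Kb = K_up[OF or bdb fin T(1,3) b1(2) db(1)] K_rt[OF or bdb fin T(1,3) b1(1) db(2)]
      from q24 show ?thesis
      proof
        assume q: "fst u24 < fst t \<and> snd t < snd u24"
        have h: "w3 = up T t \<or> w3 = lf T t" "w4 = up T t \<or> w4 = lf T t"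
          using dirok_Q2[OF w3(2)] dirok_Q2[OF w4(2)] q by auto
        then show ?thesis using opp_core[OF w3(1) w4(1) h(1) h(2) Kb(1) Ka(2)] by simp
      next
        assume q: "fst t < fst u24 \<and> snd u24 < snd t"
        have h: "w3 = dn T t \<or> w3 = rt T t" "w4 = dn T t \<or> w4 = rt T t"
          using dirok_Q4[OF w3(2)] dirok_Q4[OF w4(2)] q by auto
        then show ?thesis using opp_core[OF w3(1) w4(1) h(1) h(2) Ka(1) Kb(2)] by simp
      qed
    next
      assume b1: "fst b < fst t" "snd b < snd t" and a1: "fst t < fst a" "snd t < snd a"
      note Kb = K_dn[OF or bdb fin T(1,3) b1(2) db(1)] K_lf[OF or bdb fin T(1,3) b1(1) db(2)]
      note Ka = K_up[OF or bda fin T(1,2) a1(2) da(1)] K_rt[OF or bda fin T(1,2) a1(1) da(2)]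
      from q24 show ?thesis
      proof
        assume q: "fst u24 < fst t \<and> snd t < snd u24"
        have h: "w3 = up T t \<or> w3 = lf T t" "w4 = up T t \<or> w4 = lf T t"
          using dirok_Q2[OF w3(2)] dirok_Q2[OF w4(2)] q by auto
        then show ?thesis using opp_core[OF w3(1) w4(1) h(1) h(2) Ka(1) Kb(2)] by simp
      next
        assume q: "fst t < fst u24 \<and> snd u24 < snd t"
        have h: "w3 = dn T t \<or> w3 = rt T t" "w4 = dn T t \<or> w4 = rt T t"
          using dirok_Q4[OF w3(2)] dirok_Q4[OF w4(2)] q by auto
        then show ?thesis using opp_core[OF w3(1) w4(1) h(1) h(2) Kb(1) Ka(2)] by simp
      qed
    qed
  qed
qed



definition goodB :: "pt set \<Rightarrow> pt set \<Rightarrow> bool" where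
  "goodB T B \<longleftrightarrow> B \<subseteq> T \<and> (\<forall>m\<in>T. \<forall>s\<in>B. \<forall>e\<in>B.
     ((fst s < fst m \<and> fst m < fst e) \<or> (snd s < snd m \<and> snd m < snd e)) \<longrightarrow>
        m \<in> B \<and> m \<notin> P24 T \<and> m \<notin> P13 T)"

lemma p24_split:
  assumes gp: "general_position T" and "p \<in> P24 T" "m \<in> T" "m \<noteq> p"
  shows "(fst p < fst m \<and> snd p < snd m) \<or> (fst m < fst p \<and> snd m < snd p)"
proof -
  have pT: "p \<in> T" "Q2 p \<inter> T = {p}" "Q4 p \<inter> T = {p}" using assms(2) unfolding P24_def by auto
  have "m \<notin> Q2 p" "m \<notin> Q4 p" using pT assms(3,4) by auto
  moreover have "fst m \<noteq> fst p" "snd m \<noteq> snd p" using gpD[OF gp assms(3) pT(1) assms(4)] by auto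
  ultimately show ?thesis unfolding Q2_def Q4_def by auto
qed

lemma p13_split:
  assumes gp: "general_position T" and "p \<in> P13 T" "m \<in> T" "m \<noteq> p"
  shows "(fst p < fst m \<and> snd m < snd p) \<or> (fst m < fst p \<and> snd p < snd m)"
proof -
  have pT: "p \<in> T" "Q1 p \<inter> T = {p}" "Q3 p \<inter> T = {p}" using assms(2) unfolding P13_def by auto
  have "m \<notin> Q1 p" "m \<notin> Q3 p" using pT assms(3,4) by auto
  moreover have "fst m \<noteq> fst p" "snd m \<noteq> snd p" using gpD[OF gp assms(3) pT(1) assms(4)] by auto
  ultimately show ?thesis unfolding Q1_def Q3_def by auto
qed

lemma P24_P13_excl:
  assumes gp: "general_position T" and p: "p \<in> P24 T" and m: "m \<in> P13 T" and s: "s \<in> T" "s \<noteq> m"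
  shows False
proof (cases "m = p")
  case True
  have mT: "m \<in> T" using m unfolding P13_def by auto
  have "(fst p < fst s \<and> snd p < snd s) \<or> (fst s < fst p \<and> snd s < snd p)"
    using p24_split[OF gp p s(1)] s(2) True by auto
  moreover have "(fst m < fst s \<and> snd s < snd m) \<or> (fst s < fst m \<and> snd m < snd s)"
    using p13_split[OF gp m s] by auto
  ultimately show False using True by auto
next
  case False
  have mT: "m \<in> T" using m unfolding P13_def by auto
  have pT: "p \<in> T" using p unfolding P24_def by auto
  have "(fst p < fst m \<and> snd p < snd m) \<or> (fst m < fst p \<and> snd m < snd p)"
    using p24_split[OF gp p mT False] .
  moreover have "(fst m < fst p \<and> snd p < snd m) \<or> (fst p < fst m \<and> snd m < snd p)"
    using p13_split[OF gp m pT] False by auto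
  ultimately show False by auto
qed

lemma gB_Q3:
  assumes gp: "general_position T" and p: "p \<in> P24 T" and mn: "\<forall>r\<in>P24 T. fst p \<le> fst r"
  shows "goodB T (T \<inter> Q3 p)"
  unfolding goodB_def
proof (intro conjI ballI impI)
  fix m s e assume mT: "m \<in> T" and s: "s \<in> T \<inter> Q3 p" and e: "e \<in> T \<inter> Q3 p"
    and c: "(fst s < fst m \<and> fst m < fst e) \<or> (snd s < snd m \<and> snd m < snd e)"
  have pT: "p \<in> T" using p unfolding P24_def by auto
  have eq: "fst e \<le> fst p" "snd e \<le> snd p" using e unfolding Q3_def by auto
  have mq: "m \<in> Q3 p"
  proof (cases "m = p")
    case True then show ?thesis unfolding Q3_def by auto
  next
    case False
    then show ?thesis using p24_split[OF gp p mT False] c eq unfolding Q3_def by auto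
  qed
  then show "m \<in> T \<inter> Q3 p" using mT by auto
  show "m \<notin> P24 T"
  proof
    assume "m \<in> P24 T"
    then have "fst p \<le> fst m" using mn by auto
    moreover have "fst m \<le> fst p" using mq unfolding Q3_def by auto
    ultimately have "m = p" using gpD[OF gp mT pT] by force
    then show False using c eq by auto
  qed
  have "s \<noteq> m" using c e unfolding Q3_def by auto
  then show "m \<notin> P13 T" using P24_P13_excl[OF gp p _ _] s by blast
qed auto

lemma gB_Q1:
  assumes gp: "general_position T" and p: "p \<in> P24 T" and mx: "\<forall>r\<in>P24 T. fst r \<le> fst p"
  shows "goodB T (T \<inter> Q1 p)"
  unfolding goodB_def
proof (intro conjI ballI impI)
  fix m s e assume mT: "m \<in> T" and s: "s \<in> T \<inter> Q1 p" and e: "e \<in> T \<inter> Q1 p"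
    and c: "(fst s < fst m \<and> fst m < fst e) \<or> (snd s < snd m \<and> snd m < snd e)"
  have pT: "p \<in> T" using p unfolding P24_def by auto
  have sq: "fst p \<le> fst s" "snd p \<le> snd s" using s unfolding Q1_def by auto
  have mq: "m \<in> Q1 p"
  proof (cases "m = p")
    case True then show ?thesis unfolding Q1_def by auto
  next
    case False
    then show ?thesis using p24_split[OF gp p mT False] c sq unfolding Q1_def by auto
  qed
  then show "m \<in> T \<inter> Q1 p" using mT by auto
  show "m \<notin> P24 T"
  proof
    assume "m \<in> P24 T"
    then have "fst m \<le> fst p" using mx by auto
    moreover have "fst p \<le> fst m" using mq unfolding Q1_def by auto
    ultimately have "m = p" using gpD[OF gp mT pT] by force
    then show False using c sq by auto
  qed
  have "s \<noteq> m" using c by auto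
  then show "m \<notin> P13 T" using P24_P13_excl[OF gp p _ _] s by blast
qed auto

lemma gB_R24:
  assumes gp: "general_position T" and pq: "consec (P24 T) p q"
  shows "goodB T (T \<inter> rect p q)"
  unfolding goodB_def
proof (intro conjI ballI impI)
  fix m s e assume mT: "m \<in> T" and s: "s \<in> T \<inter> rect p q" and e: "e \<in> T \<inter> rect p q"
    and c: "(fst s < fst m \<and> fst m < fst e) \<or> (snd s < snd m \<and> snd m < snd e)"
  have p: "p \<in> P24 T" and q: "q \<in> P24 T" and lt: "fst p < fst q"
    and nb: "\<not> (\<exists>r\<in>P24 T. fst p < fst r \<and> fst r < fst q)" using pq unfolding consec_def by auto
  have pT: "p \<in> T" "q \<in> T" using p q unfolding P24_def by auto
  have pq2: "snd p < snd q" using p24_split[OF gp p pT(2)] lt by auto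
  have sr: "fst p \<le> fst s" "snd p \<le> snd s" "fst e \<le> fst q" "snd e \<le> snd q"
    using s e lt pq2 unfolding rect_def by (auto simp: min_def max_def)
  have mp: "m \<noteq> p" "m \<noteq> q" using c sr by auto
  have m1: "fst p < fst m \<and> snd p < snd m" using p24_split[OF gp p mT mp(1)] c sr by auto
  have m2: "fst m < fst q \<and> snd m < snd q" using p24_split[OF gp q mT mp(2)] c sr by auto
  show "m \<in> T \<inter> rect p q" using mT m1 m2 lt pq2 unfolding rect_def by (auto simp: min_def max_def)
  show "m \<notin> P24 T" using nb m1 m2 by auto
  have "s \<noteq> m" using c sr m1 m2 by auto
  then show "m \<notin> P13 T" using P24_P13_excl[OF gp p _ _] s by blast
qed auto

lemma gB_Q2:
  assumes gp: "general_position T" and p: "p \<in> P13 T" and mn: "\<forall>r\<in>P13 T. fst p \<le> fst r"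
    and e24: "P24 T = {}"
  shows "goodB T (T \<inter> Q2 p)"
  unfolding goodB_def
proof (intro conjI ballI impI)
  fix m s e assume mT: "m \<in> T" and s: "s \<in> T \<inter> Q2 p" and e: "e \<in> T \<inter> Q2 p"
    and c: "(fst s < fst m \<and> fst m < fst e) \<or> (snd s < snd m \<and> snd m < snd e)"
  have pT: "p \<in> T" using p unfolding P13_def by auto
  have eq: "fst e \<le> fst p" "snd p \<le> snd s" using e s unfolding Q2_def by auto
  have mq: "m \<in> Q2 p"
  proof (cases "m = p")
    case True then show ?thesis unfolding Q2_def by auto
  next
    case False
    then show ?thesis using p13_split[OF gp p mT False] c eq unfolding Q2_def by auto
  qed
  then show "m \<in> T \<inter> Q2 p" using mT by auto
  show "m \<notin> P13 T"
  proof
    assume "m \<in> P13 T"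
    then have "fst p \<le> fst m" using mn by auto
    moreover have "fst m \<le> fst p" using mq unfolding Q2_def by auto
    ultimately have "m = p" using gpD[OF gp mT pT] by force
    then show False using c eq by auto
  qed
  show "m \<notin> P24 T" using e24 by auto
qed auto

lemma gB_Q4:
  assumes gp: "general_position T" and p: "p \<in> P13 T" and mx: "\<forall>r\<in>P13 T. fst r \<le> fst p"
    and e24: "P24 T = {}"
  shows "goodB T (T \<inter> Q4 p)"
  unfolding goodB_def
proof (intro conjI ballI impI)
  fix m s e assume mT: "m \<in> T" and s: "s \<in> T \<inter> Q4 p" and e: "e \<in> T \<inter> Q4 p"
    and c: "(fst s < fst m \<and> fst m < fst e) \<or> (snd s < snd m \<and> snd m < snd e)"
  have pT: "p \<in> T" using p unfolding P13_def by auto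
  have eq: "fst p \<le> fst s" "snd e \<le> snd p" using e s unfolding Q4_def by auto
  have mq: "m \<in> Q4 p"
  proof (cases "m = p")
    case True then show ?thesis unfolding Q4_def by auto
  next
    case False
    then show ?thesis using p13_split[OF gp p mT False] c eq unfolding Q4_def by auto
  qed
  then show "m \<in> T \<inter> Q4 p" using mT by auto
  show "m \<notin> P13 T"
  proof
    assume "m \<in> P13 T"
    then have "fst m \<le> fst p" using mx by auto
    moreover have "fst p \<le> fst m" using mq unfolding Q4_def by auto
    ultimately have "m = p" using gpD[OF gp mT pT] by force
    then show False using c eq by auto
  qed
  show "m \<notin> P24 T" using e24 by auto
qed auto

lemma gB_R13:
  assumes gp: "general_position T" and pq: "consec (P13 T) p q" and e24: "P24 T = {}"
  shows "goodB T (T \<inter> rect p q)"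
  unfolding goodB_def
proof (intro conjI ballI impI)
  fix m s e assume mT: "m \<in> T" and s: "s \<in> T \<inter> rect p q" and e: "e \<in> T \<inter> rect p q"
    and c: "(fst s < fst m \<and> fst m < fst e) \<or> (snd s < snd m \<and> snd m < snd e)"
  have p: "p \<in> P13 T" and q: "q \<in> P13 T" and lt: "fst p < fst q"
    and nb: "\<not> (\<exists>r\<in>P13 T. fst p < fst r \<and> fst r < fst q)" using pq unfolding consec_def by auto
  have pT: "p \<in> T" "q \<in> T" using p q unfolding P13_def by auto
  have pq2: "snd q < snd p" using p13_split[OF gp p pT(2)] lt by auto
  have sr: "fst p \<le> fst s" "snd q \<le> snd s" "fst e \<le> fst q" "snd e \<le> snd p"
    using s e lt pq2 unfolding rect_def by (auto simp: min_def max_def)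
  have mp: "m \<noteq> p" "m \<noteq> q" using c sr by auto
  have m1: "fst p < fst m \<and> snd m < snd p" using p13_split[OF gp p mT mp(1)] c sr by auto
  have m2: "fst m < fst q \<and> snd q < snd m" using p13_split[OF gp q mT mp(2)] c sr by auto
  show "m \<in> T \<inter> rect p q" using mT m1 m2 lt pq2 unfolding rect_def by (auto simp: min_def max_def)
  show "m \<notin> P13 T" using nb m1 m2 by auto
  show "m \<notin> P24 T" using e24 by auto
qed auto

lemma gB_T:
  assumes "P24 T = {}" "P13 T = {}"
  shows "goodB T T"
  using assms unfolding goodB_def by auto

lemma blocks_good:
  assumes gp: "general_position T" and B: "B \<in> blocks T"
  shows "goodB T B"
proof (cases "P24 T \<noteq> {}")
  case True
  then have "B \<in> {T \<inter> Q3 p | p. p \<in> P24 T \<and> (\<forall>r\<in>P24 T. fst p \<le> fst r)} \<union>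
       {T \<inter> rect p q | p q. consec (P24 T) p q} \<union>
       {T \<inter> Q1 p | p. p \<in> P24 T \<and> (\<forall>r\<in>P24 T. fst r \<le> fst p)}" using B unfolding blocks_def by simp
  then show ?thesis using gB_Q3[OF gp] gB_R24[OF gp] gB_Q1[OF gp] by blast
next
  case False
  note F = False
  show ?thesis
  proof (cases "P13 T \<noteq> {}")
    case True
    then have "B \<in> {T \<inter> Q2 p | p. p \<in> P13 T \<and> (\<forall>r\<in>P13 T. fst p \<le> fst r)} \<union>
       {T \<inter> rect p q | p q. consec (P13 T) p q} \<union>
       {T \<inter> Q4 p | p. p \<in> P13 T \<and> (\<forall>r\<in>P13 T. fst r \<le> fst p)}" using B F unfolding blocks_def by simp
    moreover have e: "P24 T = {}" using F by simp
    ultimately show ?thesis using gB_Q2[OF gp _ _ e] gB_R13[OF gp _ e] gB_Q4[OF gp _ _ e] by blast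
  next
    case False
    then have "B = T" using B F unfolding blocks_def by simp
    then show ?thesis using gB_T F False by simp
  qed
qed



definition cons :: "pt set \<Rightarrow> (pt \<Rightarrow> real) \<Rightarrow> pt \<Rightarrow> pt \<Rightarrow> bool" where
  "cons T f p q \<longleftrightarrow> p \<in> T \<and> q \<in> T \<and> f p < f q \<and> \<not> (\<exists>t\<in>T. f p < f t \<and> f t < f q)"

lemma cw_boundary_sym: "cw_boundary T p q = cw_boundary T q p"
  unfolding cw_boundary_def Let_def by (simp add: min.commute max.commute)

lemma pos_slope_sym: "pos_slope p q = pos_slope q p"
  unfolding pos_slope_iff by auto

lemma phi_sym: "phi T N p q = phi T N q p"
  unfolding phi_def cw_in_def cw_boundary_sym[of T p q] pos_slope_sym[of p q] by simp

lemma bd_sym: "boundary_directed T N p q = boundary_directed T N q p"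
  unfolding boundary_directed_def cw_in_def ccw_in_def ccw_boundary_def cw_boundary_sym[of T p q] by simp

lemma finj:
  assumes gp: "general_position T" and f: "f = fst \<or> f = snd" and "a \<in> T" "b \<in> T" "f a = f b"
  shows "a = b"
  using gpD[OF gp assms(3,4)] f assms(5) by auto

lemma rect_mem: "r \<in> rect p q \<longleftrightarrow> min (fst p) (fst q) \<le> fst r \<and> fst r \<le> max (fst p) (fst q) \<and>
                  min (snd p) (snd q) \<le> snd r \<and> snd r \<le> max (snd p) (snd q)"
  unfolding rect_def by simp

lemma cons_strip:
  assumes gp: "general_position T" and f: "f = fst \<or> f = snd" and c: "cons T f p q"
  shows "is_strip T p q"
proof -
  have pq: "p \<in> T" "q \<in> T" "f p < f q" "\<not> (\<exists>t\<in>T. f p < f t \<and> f t < f q)" using c unfolding cons_def by auto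
  have ne: "p \<noteq> q" using pq(3) by auto
  have er: "empty_rect T p q"
    unfolding empty_rect_def
  proof
    show "rect p q \<inter> T \<subseteq> {p, q}"
    proof
      fix t assume t: "t \<in> rect p q \<inter> T"
      have "min (f p) (f q) \<le> f t \<and> f t \<le> max (f p) (f q)" using t f by (auto simp: rect_mem)
      then have "f t = f p \<or> f t = f q" using pq(3,4) t by (auto simp: min_def max_def)
      then show "t \<in> {p,q}" using finj[OF gp f] t pq(1,2) by blast
    qed
    show "{p, q} \<subseteq> rect p q \<inter> T" using pq(1,2) by (auto simp: rect_mem)
  qed
  show ?thesis using f
  proof
    assume "f = fst"
    then show ?thesis using pq ne er unfolding is_strip_def vstrip_def by (auto simp: min_def max_def)
  next
    assume "f = snd"
    then show ?thesis using pq ne er unfolding is_strip_def hstrip_def by (auto simp: min_def max_def)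
  qed
qed

lemma strip_cons:
  assumes gp: "general_position T" and s: "is_strip T p q"
  shows "cons T fst p q \<or> cons T fst q p \<or> cons T snd p q \<or> cons T snd q p"
  using s
  unfolding is_strip_def
proof
  assume v: "vstrip T p q"
  then have pq: "p \<in> T" "q \<in> T" "p \<noteq> q" "\<not> (\<exists>t\<in>T. min (fst p) (fst q) < fst t \<and> fst t < max (fst p) (fst q))"
    unfolding vstrip_def by auto
  have "fst p \<noteq> fst q" using gpD[OF gp pq(1,2,3)] by auto
  then show ?thesis using pq unfolding cons_def by (auto simp: min_def max_def split: if_splits)
next
  assume v: "hstrip T p q"
  then have pq: "p \<in> T" "q \<in> T" "p \<noteq> q" "\<not> (\<exists>t\<in>T. min (snd p) (snd q) < snd t \<and> snd t < max (snd p) (snd q))"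
    unfolding hstrip_def by auto
  have "snd p \<noteq> snd q" using gpD[OF gp pq(1,2,3)] by auto
  then show ?thesis using pq unfolding cons_def by (auto simp: min_def max_def split: if_splits)
qed

lemma succ_ex:
  assumes fin: "finite T" and "p \<in> T" "t \<in> T" "f p < f t"
  shows "\<exists>q. cons T f p q"
proof -
  define A where "A = {x\<in>f ` T. f p < x}"
  have fA: "finite A" using fin unfolding A_def by simp
  have nA: "A \<noteq> {}" using assms unfolding A_def by blast
  have "Min A \<in> A" using Min_in[OF fA nA] .
  then obtain q where q: "q \<in> T" "f q = Min A" "f p < f q" unfolding A_def by auto
  have "\<not> (\<exists>t\<in>T. f p < f t \<and> f t < f q)"
  proof
    assume "\<exists>t\<in>T. f p < f t \<and> f t < f q"
    then obtain t where t: "t \<in> T" "f p < f t" "f t < f q" by blast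
    have "f t \<in> A" using t unfolding A_def by auto
    then have "Min A \<le> f t" using Min_le[OF fA] by blast
    then show False using t q by simp
  qed
  then show ?thesis using q assms(2) unfolding cons_def by blast
qed

lemma pred_ex:
  assumes fin: "finite T" and "p \<in> T" "t \<in> T" "f t < f p"
  shows "\<exists>q. cons T f q p"
proof -
  define A where "A = {x\<in>f ` T. x < f p}"
  have fA: "finite A" using fin unfolding A_def by simp
  have nA: "A \<noteq> {}" using assms unfolding A_def by blast
  have "Max A \<in> A" using Max_in[OF fA nA] .
  then obtain q where q: "q \<in> T" "f q = Max A" "f q < f p" unfolding A_def by auto
  have "\<not> (\<exists>t\<in>T. f q < f t \<and> f t < f p)"
  proof
    assume "\<exists>t\<in>T. f q < f t \<and> f t < f p"
    then obtain t where t: "t \<in> T" "f q < f t" "f t < f p" by blast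
    have "f t \<in> A" using t unfolding A_def by auto
    then have "f t \<le> Max A" using Max_ge[OF fA] by blast
    then show False using t q by simp
  qed
  then show ?thesis using q assms(2) unfolding cons_def by blast
qed

lemma goodB_f:
  assumes g: "goodB T B" and f: "f = fst \<or> f = snd" and "m \<in> T" "s \<in> B" "e \<in> B" "f s < f m" "f m < f e"
  shows "m \<in> B \<and> m \<notin> P24 T \<and> m \<notin> P13 T"
  using g f assms(3-7) unfolding goodB_def by blast

locale ctx =
  fixes T N
  assumes gp: "general_position T" and bm: "bidirected_manhattan T N"
    and sd: "\<forall>p q. is_strip T p q \<longrightarrow> boundary_directed T N p q"
begin

lemma fin: "finite T" using gp gp_fin by blast
lemma or: "oriented_subnetwork T N" using bm unfolding bidirected_manhattan_def by blast

lemma bd_cons: "f = fst \<or> f = snd \<Longrightarrow> cons T f p q \<Longrightarrow> boundary_directed T N p q"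
  using cons_strip[OF gp] sd by blast

lemma step:
  assumes f: "f = fst \<or> f = snd" and c1: "cons T f p q" and c2: "cons T f q r"
    and n: "q \<notin> P24 T" "q \<notin> P13 T"
  shows "phi T N p q = phi T N q r"
proof -
  have b1: "boundary_directed T N q p" using bd_cons[OF f c1] bd_sym by blast
  have b2: "boundary_directed T N q r" using bd_cons[OF f c2] .
  have T: "q \<in> T" "p \<in> T" "r \<in> T" "q \<noteq> p" "q \<noteq> r" using c1 c2 unfolding cons_def by auto
  have "phi T N q p = phi T N q r" using L_opp[OF bm gp T b1 b2 n] .
  then show ?thesis using phi_sym by metis
qed

lemma chain_le:
  assumes g: "goodB T B" and f: "f = fst \<or> f = snd"
  shows "cons T f p q \<Longrightarrow> cons T f p' q' \<Longrightarrow> p \<in> B \<Longrightarrow> q \<in> B \<Longrightarrow> p' \<in> B \<Longrightarrow> q' \<in> B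
    \<Longrightarrow> f p \<le> f p' \<Longrightarrow> phi T N p q = phi T N p' q'"
proof (induction "card {t\<in>T. f p < f t \<and> f t < f p'}" arbitrary: p q rule: less_induct)
  case less
  have BT: "B \<subseteq> T" using g unfolding goodB_def by blast
  have c: "p \<in> T" "q \<in> T" "f p < f q" "\<not> (\<exists>t\<in>T. f p < f t \<and> f t < f q)" using less.prems(1) unfolding cons_def by auto
  have c': "p' \<in> T" "q' \<in> T" "f p' < f q'" "\<not> (\<exists>t\<in>T. f p' < f t \<and> f t < f q')" using less.prems(2) unfolding cons_def by auto
  show ?case
  proof (cases "f p = f p'")
    case True
    then have pp: "p = p'" using finj[OF gp f c(1) c'(1)] by blast
    have "f q = f q'"
    proof (rule ccontr)
      assume "f q \<noteq> f q'"
      then have "f q < f q' \<or> f q' < f q" by linarith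
      then show False using c c' pp by blast
    qed
    then have "q = q'" using finj[OF gp f c(2) c'(2)] by blast
    then show ?thesis using pp by simp
  next
    case False
    then have lt: "f p < f p'" using less.prems(7) by linarith
    have qle: "f q \<le> f p'" using c(4) c'(1) lt by force
    show ?thesis
    proof (cases "q = p'")
      case True
      have "p' \<notin> P24 T \<and> p' \<notin> P13 T" using goodB_f[OF g f c'(1) less.prems(3) less.prems(6)] lt c'(3) by blast
      then show ?thesis using step[OF f less.prems(1)] less.prems(2) True by blast
    next
      case False
      have qlt: "f q < f p'" using qle False finj[OF gp f c(2) c'(1)] by force
      have qB: "q \<in> B" "q \<notin> P24 T" "q \<notin> P13 T" using goodB_f[OF g f c(2) less.prems(3) less.prems(5)] c(3) qlt by auto
      obtain r where r: "cons T f q r" using succ_ex[OF fin c(2) c'(1) qlt] by blast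
      have rc: "r \<in> T" "f q < f r" "\<not> (\<exists>t\<in>T. f q < f t \<and> f t < f r)" using r unfolding cons_def by auto
      have rle: "f r \<le> f p'" using rc(3) c'(1) qlt by force
      have rB: "r \<in> B"
      proof (cases "f r = f p'")
        case True then show ?thesis using finj[OF gp f rc(1) c'(1)] less.prems(5) by blast
      next
        case False
        then have "f r < f p'" using rle by linarith
        then show ?thesis using goodB_f[OF g f rc(1) less.prems(3) less.prems(5)] c(3) rc(2) by auto
      qed
      have s1: "phi T N p q = phi T N q r" using step[OF f less.prems(1) r qB(2,3)] .
      have sub: "{t\<in>T. f q < f t \<and> f t < f p'} \<subset> {t\<in>T. f p < f t \<and> f t < f p'}"
        using c(2,3) qlt by auto
      have "card {t\<in>T. f q < f t \<and> f t < f p'} < card {t\<in>T. f p < f t \<and> f t < f p'}"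
        using psubset_card_mono[OF _ sub] fin by auto
      then have "phi T N q r = phi T N p' q'"
        using less.hyps[OF _ r less.prems(2) qB(1) rB less.prems(5,6)] qle qlt by simp
      then show ?thesis using s1 by simp
    qed
  qed
qed

lemma chain:
  assumes g: "goodB T B" and f: "f = fst \<or> f = snd"
    and "cons T f p q" "cons T f p' q'" "p \<in> B" "q \<in> B" "p' \<in> B" "q' \<in> B"
  shows "phi T N p q = phi T N p' q'"
proof (cases "f p \<le> f p'")
  case True then show ?thesis using chain_le[OF g f assms(3-8)] by blast
next
  case False then show ?thesis using chain_le[OF g f assms(4,3,7,8,5,6)] by simp
qed

lemma link:
  assumes g: "goodB T B" and c: "cons T fst p q" and B: "p \<in> B" "q \<in> B"
  shows "\<exists>r s. cons T snd r s \<and> r \<in> B \<and> s \<in> B \<and> phi T N p q = phi T N r s"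
proof -
  have pq: "p \<in> T" "q \<in> T" "p \<noteq> q" using c unfolding cons_def by auto
  have d: "snd p \<noteq> snd q" using gpD[OF gp pq] by auto
  have bq: "boundary_directed T N p q" using bd_cons[OF _ c] by simp
  show ?thesis
  proof (cases "snd p < snd q")
    case True
    obtain r where r: "cons T snd p r" using succ_ex[OF fin pq(1,2) True] by blast
    have rc: "r \<in> T" "snd p < snd r" "\<not> (\<exists>t\<in>T. snd p < snd t \<and> snd t < snd r)" using r unfolding cons_def by auto
    have rle: "snd r \<le> snd q" using rc(3) pq(2) True by force
    have rB: "r \<in> B"
    proof (cases "snd r = snd q")
      case True then show ?thesis using finj[OF gp _ rc(1) pq(2)] B by auto
    next
      case False
      then have "snd r < snd q" using rle by linarith
      then show ?thesis using goodB_f[OF g _ rc(1) B(1) B(2)] rc(2) by auto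
    qed
    have br: "boundary_directed T N p r" using bd_cons[OF _ r] by simp
    have rp: "p \<noteq> r" using rc(2) by auto
    have "phi T N p q = phi T N p r" using L_same[OF or gp pq(1,2) rc(1) pq(3) rp bq br] True rc(2) by blast
    then show ?thesis using r B(1) rB by blast
  next
    case False
    then have lt: "snd q < snd p" using d by linarith
    obtain r where r: "cons T snd r p" using pred_ex[OF fin pq(1,2) lt] by blast
    have rc: "r \<in> T" "snd r < snd p" "\<not> (\<exists>t\<in>T. snd r < snd t \<and> snd t < snd p)" using r unfolding cons_def by auto
    have rle: "snd q \<le> snd r" using rc(3) pq(2) lt by force
    have rB: "r \<in> B"
    proof (cases "snd r = snd q")
      case True then show ?thesis using finj[OF gp _ rc(1) pq(2)] B by auto
    next
      case False
      then have "snd q < snd r" using rle by linarith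
      then show ?thesis using goodB_f[OF g _ rc(1) B(2) B(1)] rc(2) by auto
    qed
    have br: "boundary_directed T N p r" using bd_cons[OF _ r] bd_sym by blast
    have rp: "p \<noteq> r" using rc(2) by auto
    have "phi T N p q = phi T N p r" using L_same[OF or gp pq(1,2) rc(1) pq(3) rp bq br] lt rc(2) by blast
    then have "phi T N p q = phi T N r p" using phi_sym by metis
    then show ?thesis using r B(1) rB by blast
  qed
qed

lemma all_cons:
  assumes g: "goodB T B" and f1: "f1 = fst \<or> f1 = snd" and f2: "f2 = fst \<or> f2 = snd"
    and c1: "cons T f1 p q" and c2: "cons T f2 p' q'" and B: "p \<in> B" "q \<in> B" "p' \<in> B" "q' \<in> B"
  shows "phi T N p q = phi T N p' q'"
proof -
  have snd_case: "phi T N a b = phi T N p' q'" if c: "cons T snd a b" "a \<in> B" "b \<in> B" for a b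
  proof (cases "f2 = snd")
    case True then show ?thesis using chain[OF g _ c(1) _ c(2,3) B(3,4)] c2 by simp
  next
    case False
    then have "f2 = fst" using f2 by blast
    then obtain r s where rs: "cons T snd r s" "r \<in> B" "s \<in> B" "phi T N p' q' = phi T N r s"
      using link[OF g _ B(3,4)] c2 by blast
    show ?thesis using chain[OF g _ c(1) rs(1) c(2,3) rs(2,3)] rs(4) by simp
  qed
  show ?thesis
  proof (cases "f1 = snd")
    case True then show ?thesis using snd_case c1 B(1,2) by simp
  next
    case False
    then have "f1 = fst" using f1 by blast
    then obtain r s where rs: "cons T snd r s" "r \<in> B" "s \<in> B" "phi T N p q = phi T N r s"
      using link[OF g _ B(1,2)] c1 by blast
    then show ?thesis using snd_case[OF rs(1-3)] by simp
  qed
qed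

lemma strip_rep:
  assumes s: "is_strip T p q" and B: "p \<in> B" "q \<in> B"
  shows "\<exists>f a b. (f = fst \<or> f = snd) \<and> cons T f a b \<and> a \<in> B \<and> b \<in> B \<and> phi T N p q = phi T N a b"
  using strip_cons[OF gp s] B phi_sym by metis

lemma excl_strip:
  assumes "p \<in> T" "q \<in> T" "p \<noteq> q"
  shows "\<not> (cw_in T N p q \<and> ccw_in T N p q)"
proof -
  have d: "fst p \<noteq> fst q" "snd p \<noteq> snd q" using gpD[OF gp assms] by auto
  have "\<exists>e. e \<in> cw_boundary T p q"
  proof (cases "snd p < snd q")
    case True
    show ?thesis
    proof (cases "fst p < fst q")
      case True2: True
      show ?thesis using cw_up_L[OF fin assms(1,2) True True2] by blast
    next
      case False
      then have "fst q < fst p" using d by linarith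
      then show ?thesis using cw_up_R[OF fin assms(1,2) True] by blast
    qed
  next
    case False
    then have lt: "snd q < snd p" using d by linarith
    show ?thesis
    proof (cases "fst p < fst q")
      case True2: True
      show ?thesis using cw_dn_L[OF fin assms(1,2) lt True2] by blast
    next
      case False
      then have "fst q < fst p" using d by linarith
      then show ?thesis using cw_dn_R[OF fin assms(1,2) lt] by blast
    qed
  qed
  then show ?thesis using excl_gen[OF or] by (metis surj_pair)
qed

end


theorem lemma4p1:
  fixes T :: "pt set" and N :: "(pt \<times> pt) set" and B :: "pt set"
    and p1 q1 p2 q2 :: pt
  assumes "general_position T"
    and "bidirected_manhattan T N"
    and "\<forall>p q. is_strip T p q \<longrightarrow> boundary_directed T N p q"
    and "B \<in> blocks T"
    and "is_strip T p1 q1" and "p1 \<in> B" and "q1 \<in> B"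
    and "is_strip T p2 q2" and "p2 \<in> B" and "q2 \<in> B"
  shows "compatible T N p1 q1 p2 q2"
proof -
  interpret ctx T N using assms(1-3) by unfold_locales
  have g: "goodB T B" using blocks_good[OF assms(1,4)] .
  obtain f1 a1 b1 where r1: "f1 = fst \<or> f1 = snd" "cons T f1 a1 b1" "a1 \<in> B" "b1 \<in> B"
      "phi T N p1 q1 = phi T N a1 b1"
    using strip_rep[OF assms(5,6,7)] by blast
  obtain f2 a2 b2 where r2: "f2 = fst \<or> f2 = snd" "cons T f2 a2 b2" "a2 \<in> B" "b2 \<in> B"
      "phi T N p2 q2 = phi T N a2 b2"
    using strip_rep[OF assms(8,9,10)] by blast
  have eq: "phi T N p1 q1 = phi T N p2 q2"
    using all_cons[OF g r1(1) r2(1) r1(2) r2(2) r1(3,4) r2(3,4)] r1(5) r2(5) by simp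
  have m1: "p1 \<in> T" "q1 \<in> T" "p1 \<noteq> q1" using assms(5) unfolding is_strip_def vstrip_def hstrip_def by auto
  have m2: "p2 \<in> T" "q2 \<in> T" "p2 \<noteq> q2" using assms(8) unfolding is_strip_def vstrip_def hstrip_def by auto
  have bd1: "cw_in T N p1 q1 \<or> ccw_in T N p1 q1" using assms(3,5) unfolding boundary_directed_def by blast
  have bd2: "cw_in T N p2 q2 \<or> ccw_in T N p2 q2" using assms(3,8) unfolding boundary_directed_def by blast
  have e1: "\<not> (cw_in T N p1 q1 \<and> ccw_in T N p1 q1)" using excl_strip[OF m1] .
  have e2: "\<not> (cw_in T N p2 q2 \<and> ccw_in T N p2 q2)" using excl_strip[OF m2] .
  show ?thesis using eq bd1 bd2 e1 e2 unfolding compatible_def phi_def by blast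
qed

end
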